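(* Fix $k\in\mathbb N$ and $s>0$. For every $\varepsilon>0$ there exists $\eta>0$ such that, for all sufficiently large $P$, all $R$ with $2\le R\le P^\eta$, all real $M\ge1$, all $Q$ with $1\le Q\le P^{k/2}$ and all integers $q$ with $1\le q\le Q$, one has \[ \int_{\mathfrak M_q(Q,P)}|f_q^\dagger(\alpha;P,M,R)|^s\,d\alpha\ll QM^sP^{\varepsilon-k}, \] with implied constant depending only on $\varepsilon,\eta,k,s$.
   Context: For real $P,R\ge1$, $\mathscr A(P,R)$ is the set of integers $n\in[1,P]$ all of whose prime divisors are at most $R$; $e(z)=e^{2\pi iz}$. For $q\in\mathbb N$, $u\mid q^\infty$ means every prime dividing $u$ divides $q$, and $\mathscr C_q(P,R)=\{n\in\mathscr A(P,R): n\mid q^\infty\}$. Define $f_q^\dagger(\alpha;P,M,R)=\sum_{v\in\mathscr A(M,R),\ (v,q)=1}\sum_{u\in\mathscr C_q(P/v,R)}e(\alpha(uv)^k)$. For $1\le q\le Q$, $\mathfrak M_q(Q,P)$ is the union over $0\le a\le q$ with $(a,q)=1$ of $\{\alpha\in[0,1):|q\alpha-a|\le QP^{-k}\}$. *)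

theory Defs
  imports "HOL-Analysis.Analysis" "HOL-Computational_Algebra.Primes"
begin

definition ee :: "real \<Rightarrow> complex" where
  "ee z = exp (2 * of_real pi * \<i> * of_real z)"

definition smooth_set :: "real \<Rightarrow> real \<Rightarrow> nat set" where
  "smooth_set P R = {n. 1 \<le> n \<and> real n \<le> P \<and> (\<forall>p. prime p \<and> p dvd n \<longrightarrow> real p \<le> R)}"

text \<open>C_q(P,R): elements of A(P,R) dividing q^infinity\<close>
definition Cq_set :: "nat \<Rightarrow> real \<Rightarrow> real \<Rightarrow> nat set" where
  "Cq_set q P R = {n \<in> smooth_set P R. \<forall>p. prime p \<and> p dvd n \<longrightarrow> p dvd q}"

definition f_dagger :: "nat \<Rightarrow> nat \<Rightarrow> real \<Rightarrow> real \<Rightarrow> real \<Rightarrow> real \<Rightarrow> complex" where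
  "f_dagger k q \<alpha> P M R =
     (\<Sum>v \<in> {v \<in> smooth_set M R. coprime v q}.
        \<Sum>u \<in> Cq_set q (P / real v) R. ee (\<alpha> * real (u * v) ^ k))"

definition major_arc :: "nat \<Rightarrow> nat \<Rightarrow> real \<Rightarrow> real \<Rightarrow> real set" where
  "major_arc k q Q P =
     (\<Union>a \<in> {a. a \<le> q \<and> coprime a q}.
        {\<alpha>. 0 \<le> \<alpha> \<and> \<alpha> < 1 \<and> \<bar>real q * \<alpha> - real a\<bar> \<le> Q * P powr (- real k)})"

end

theory Submission
  imports Defs
begin


definition U :: "nat set \<Rightarrow> real \<Rightarrow> nat set" where
  "U S P = {u. 1 \<le> u \<and> real u \<le> P \<and> (\<forall>p. prime p \<and> p dvd u \<longrightarrow> p \<in> S)}"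

lemma U_finite: "finite (U S P)"
proof (rule finite_subset)
  show "U S P \<subseteq> {..nat \<lceil>P\<rceil>}"
  proof
    fix u assume "u \<in> U S P"
    hence "real u \<le> P" by (simp add: U_def)
    hence "real u \<le> real_of_int \<lceil>P\<rceil>" using le_of_int_ceiling[of P] by linarith
    hence "int u \<le> \<lceil>P\<rceil>" by (metis of_int_le_iff of_int_of_nat_eq)
    thus "u \<in> {..nat \<lceil>P\<rceil>}" by simp
  qed
qed simp

lemma U_count:
  assumes "finite S" "\<forall>p\<in>S. prime p" "\<delta> > 0" "P > 0"
  shows "real (card (U S P)) \<le> P powr \<delta> * (\<Prod>p\<in>S. 1 / (1 - real p powr (-\<delta>)))"
  using assms
proof (induction S arbitrary: P rule: finite_induct)
  case empty
  show ?case
  proof (cases "P \<ge> 1")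
    case True
    have "U {} P \<subseteq> {1}"
      by (auto simp: U_def) (metis One_nat_def prime_factor_nat)
    hence "card (U {} P) \<le> card {1::nat}" by (intro card_mono) auto
    moreover have "1 \<le> P powr \<delta>" using True empty by (simp add: ge_one_powr_ge_zero)
    ultimately show ?thesis by simp
  next
    case False
    hence "U {} P = {}" by (auto simp: U_def)
    thus ?thesis by simp
  qed
next
  case (insert p S)
  have pp: "prime p" using insert.prems(1) by simp
  hence p2: "p \<ge> 2" by (simp add: prime_ge_2_nat)
  define x where "x = real p powr (-\<delta>)"
  have x0: "0 < x" using p2 by (simp add: x_def)
  have x1: "x < 1" unfolding x_def using p2 insert.prems(2)
    by (intro powr_less_one) auto
  define N where "N = nat \<lceil>P\<rceil> + 1"
  define G where "G = (\<Prod>p\<in>S. 1 / (1 - real p powr (-\<delta>)))"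
  have G0: "G \<ge> 0" unfolding G_def
  proof (rule prod_nonneg)
    fix r assume "r \<in> S"
    hence "prime r" using insert.prems(1) by simp
    hence "real r powr (-\<delta>) < 1" using insert.prems(2) prime_ge_2_nat[of r]
      by (intro powr_less_one) auto
    thus "0 \<le> 1 / (1 - real r powr (-\<delta>))" by simp
  qed
  have sub: "U (insert p S) P \<subseteq> (\<Union>a\<in>{..<N}. (\<lambda>u. p^a * u) ` U S (P / real p ^ a))"
  proof
    fix u assume u: "u \<in> U (insert p S) P"
    have u1: "u \<ge> 1" "real u \<le> P" using u by (auto simp: U_def)
    obtain y where y: "u = p ^ multiplicity p u * y" "\<not> p dvd y"
      by (rule multiplicity_decompose'[where x=u and p=p]) (use u1 p2 in auto)
    define a where "a = multiplicity p u"
    have ua: "u = p ^ a * y" using y(1) a_def by simp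
    have ypos: "y \<ge> 1" using ua u1 by (cases "y = 0") auto
    have "real u = real (p ^ a) * real y" using ua by (simp only: of_nat_mult)
    hence "real (p ^ a) * real y \<le> P" using u1 by simp
    have ppos: "(0::real) < real p ^ a" using p2 by simp
    hence yle: "real y \<le> P / real p ^ a" using \<open>real (p ^ a) * real y \<le> P\<close>
      by (simp add: pos_le_divide_eq mult.commute)
    have "real (p^a) * 1 \<le> real (p^a) * real y" using ypos
      by (intro mult_left_mono) auto
    hence "real (p^a) \<le> P" using \<open>real (p ^ a) * real y \<le> P\<close> by linarith
    moreover have "a < 2 ^ a" by simp
    moreover have "(2::nat) ^ a \<le> p ^ a" using p2 by (simp add: power_mono)
    ultimately have "a < p ^ a" "real (p^a) \<le> P" by linarith+
    hence "real a < real (p^a)" "real (p^a) \<le> P" by (simp only: of_nat_less_iff)+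
    hence "real a < P" by linarith
    hence aN: "a < N" unfolding N_def by linarith
    have yS: "\<forall>r. prime r \<and> r dvd y \<longrightarrow> r \<in> S"
    proof (intro allI impI)
      fix r assume r: "prime r \<and> r dvd y"
      hence "r dvd u" using y(1) by (metis dvd_mult)
      hence "r \<in> insert p S" using u r by (auto simp: U_def)
      moreover have "r \<noteq> p" using r y(2) by blast
      ultimately show "r \<in> S" by auto
    qed
    have "y \<in> U S (P / real p ^ a)" using yle ypos yS by (auto simp: U_def)
    thus "u \<in> (\<Union>a\<in>{..<N}. (\<lambda>u. p^a * u) ` U S (P / real p ^ a))"
      using aN ua by (intro UN_I[of a] image_eqI[of u _ y]) auto
  qed
  have "card (U (insert p S) P) \<le> card (\<Union>a\<in>{..<N}. (\<lambda>u. p^a * u) ` U S (P / real p ^ a))"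
    by (rule card_mono[OF _ sub]) (simp add: U_finite)
  also have "\<dots> \<le> (\<Sum>a<N. card ((\<lambda>u. p^a * u) ` U S (P / real p ^ a)))"
    by (rule card_UN_le) simp
  also have "\<dots> \<le> (\<Sum>a<N. card (U S (P / real p ^ a)))"
    by (intro sum_mono card_image_le U_finite)
  finally have "real (card (U (insert p S) P)) \<le> (\<Sum>a<N. real (card (U S (P / real p ^ a))))"
    by (metis of_nat_le_iff of_nat_sum)
  also have "\<dots> \<le> (\<Sum>a<N. (P / real p ^ a) powr \<delta> * G)"
  proof (intro sum_mono)
    fix a assume "a \<in> {..<N}"
    have "P / real p ^ a > 0" using p2 insert.prems(3) by simp
    thus "real (card (U S (P / real p ^ a))) \<le> (P / real p ^ a) powr \<delta> * G"
      unfolding G_def by (rule insert.IH[rotated -1]) (use insert.prems in auto)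
  qed
  also have "\<dots> \<le> (\<Sum>a<N. P powr \<delta> * x ^ a * G)"
  proof (intro sum_mono)
    fix a assume "a \<in> {..<N}"
    have "(P / real p ^ a) powr \<delta> \<le> P powr \<delta> * x ^ a"
    proof -
      have True: "P > 0" using insert.prems by simp
      have "(P / real p ^ a) powr \<delta> = P powr \<delta> / (real p ^ a) powr \<delta>"
        using True p2 by (simp add: powr_divide)
      also have "\<dots> = P powr \<delta> * x ^ a"
      proof -
        have pp0: "real p > 0" using p2 by simp
        have "(real p ^ a) powr \<delta> = real p powr (real a * \<delta>)"
          using pp0 by (simp add: powr_powr flip: powr_realpow)
        moreover have "x ^ a = real p powr (real a * (-\<delta>))"
          unfolding x_def using pp0 by (simp add: powr_power)
        ultimately show ?thesis by (simp add: powr_minus_divide)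
      qed
      finally show ?thesis by simp
    qed
    thus "(P / real p ^ a) powr \<delta> * G \<le> P powr \<delta> * x ^ a * G" using G0 by (rule mult_right_mono)
  qed
  also have "\<dots> = P powr \<delta> * G * (\<Sum>a<N. x ^ a)"
    by (simp add: sum_distrib_left sum_distrib_right mult_ac)
  also have "\<dots> \<le> P powr \<delta> * G * (1 / (1 - x))"
  proof (rule mult_left_mono)
    have "(\<Sum>a<N. x ^ a) = (1 - x^N) / (1 - x)" using x1 by (simp add: sum_gp_strict)
    also have "\<dots> \<le> 1 / (1 - x)" using x0 x1 by (simp add: divide_right_mono)
    finally show "(\<Sum>a<N. x ^ a) \<le> 1 / (1 - x)" .
    show "0 \<le> P powr \<delta> * G" using G0 by simp
  qed
  also have "\<dots> = P powr \<delta> * (\<Prod>p\<in>insert p S. 1 / (1 - real p powr (-\<delta>)))"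
    using insert by (simp add: G_def x_def mult_ac)
  finally show ?case .
qed


lemma g_bound:
  assumes "p \<ge> (2::nat)" "\<delta> > 0"
  shows "1 / (1 - real p powr (-\<delta>)) \<le>
    (if real p < 2 powr (1/\<delta>) then 1 / (1 - 2 powr (-\<delta>)) else 1) * real p powr \<delta>"
proof -
  define y where "y = real p powr \<delta>"
  have y1: "y \<ge> 1" unfolding y_def using assms by (intro ge_one_powr_ge_zero) auto
  have "2 powr \<delta> \<le> y" unfolding y_def using assms by (intro powr_mono2) auto
  have ymin: "real p powr (-\<delta>) = 1 / y" unfolding y_def by (simp add: powr_minus_divide)
  have two: "(2::real) powr (-\<delta>) = 1 / 2 powr \<delta>" by (simp add: powr_minus_divide)
  have t1: "2 powr \<delta> > (1::real)" using assms by (intro gr_one_powr) auto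
  show ?thesis
  proof (cases "real p < 2 powr (1/\<delta>)")
    case True
    have "1 / (1 - 1 / y) \<le> 1 / (1 - 1 / 2 powr \<delta>)"
    proof -
      have "1 / y \<le> 1 / 2 powr \<delta>" using \<open>2 powr \<delta> \<le> y\<close> t1
        by (intro divide_left_mono) auto
      moreover have "1 / 2 powr \<delta> < (1::real)" using t1 by simp
      ultimately have a: "0 < 1 - 1 / 2 powr \<delta>" and b: "1 - 1 / 2 powr \<delta> \<le> 1 - 1 / y" by auto
      have "0 < 1 - 1 / y" using a b by linarith
      show ?thesis by (rule divide_left_mono[OF b]) (use a \<open>0 < 1 - 1 / y\<close> in auto)
    qed
    also have "\<dots> \<le> 1 / (1 - 1 / 2 powr \<delta>) * y"
    proof -
      have "0 \<le> 1 / (1 - 1 / 2 powr \<delta>)" using t1 by simp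
      from mult_left_mono[OF y1 this] show ?thesis by simp
    qed
    finally show ?thesis using True by (simp add: ymin two y_def)
  next
    case False
    have "2 = (2 powr (1/\<delta>)) powr \<delta>" using assms by (simp add: powr_powr)
    also have "\<dots> \<le> y" unfolding y_def using False assms by (intro powr_mono2) auto
    finally have y2: "y \<ge> 2" .
    have "1 / (1 - 1 / y) = y / (y - 1)" using y2 by (simp add: field_simps)
    also have "\<dots> \<le> y" using y2 by (simp add: field_simps)
    finally show ?thesis using False by (simp add: ymin y_def)
  qed
qed

lemma prod_g_bound:
  assumes "q \<ge> (1::nat)" "\<delta> > 0"
  shows "(\<Prod>p\<in>prime_factors q. 1 / (1 - real p powr (-\<delta>))) \<le>
     (1 / (1 - 2 powr (-\<delta>))) ^ nat \<lceil>2 powr (1/\<delta>)\<rceil> * real q powr \<delta>"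
proof -
  define c0 :: real where "c0 = 1 / (1 - 2 powr (-\<delta>))"
  define X :: real where "X = 2 powr (1/\<delta>)"
  define S where "S = prime_factors q"
  have Sfin: "finite S" unfolding S_def by simp
  have Sp: "\<And>p. p \<in> S \<Longrightarrow> prime p \<and> p \<ge> 2" unfolding S_def
    using in_prime_factors_iff prime_ge_2_nat by blast
  have t1: "2 powr \<delta> > (1::real)" using assms by (intro gr_one_powr) auto
  have c01: "c0 \<ge> 1" unfolding c0_def using t1 assms
    by (simp add: powr_minus_divide field_simps)
  have "(\<Prod>p\<in>S. 1 / (1 - real p powr (-\<delta>))) \<le>
        (\<Prod>p\<in>S. (if real p < X then c0 else 1) * real p powr \<delta>)"
  proof (rule prod_mono)
    fix p assume "p \<in> S"
    hence p2: "p \<ge> 2" using Sp by blast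
    have "real p powr (-\<delta>) < 1" using p2 assms by (intro powr_less_one) auto
    hence "0 \<le> 1 / (1 - real p powr (-\<delta>))" by simp
    moreover have "1 / (1 - real p powr (-\<delta>)) \<le> (if real p < X then c0 else 1) * real p powr \<delta>"
      using g_bound[OF p2 assms(2)] unfolding c0_def X_def .
    ultimately show "0 \<le> 1 / (1 - real p powr (-\<delta>)) \<and> 1 / (1 - real p powr (-\<delta>)) \<le> (if real p < X then c0 else 1) * real p powr \<delta>" ..
  qed
  also have "\<dots> = (\<Prod>p\<in>S. (if real p < X then c0 else 1)) * (\<Prod>p\<in>S. real p powr \<delta>)"
    by (rule prod.distrib)
  finally have main: "(\<Prod>p\<in>S. 1 / (1 - real p powr (-\<delta>))) \<le> (\<Prod>p\<in>S. (if real p < X then c0 else 1)) * (\<Prod>p\<in>S. real p powr \<delta>)" .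
  have A: "(\<Prod>p\<in>S. (if real p < X then c0 else 1)) \<le> c0 ^ nat \<lceil>X\<rceil>"
  proof -
  have "(\<Prod>p\<in>S. (if real p < X then c0 else 1)) = c0 ^ card {p\<in>S. real p < X}"
    using Sfin by (simp add: prod.inter_filter[symmetric])
  also have "\<dots> \<le> c0 ^ nat \<lceil>X\<rceil>"
  proof (rule power_increasing[OF _ c01])
    have "{p\<in>S. real p < X} \<subseteq> {..<nat \<lceil>X\<rceil>}"
    proof
      fix p assume "p \<in> {p\<in>S. real p < X}"
      hence "real p < X" by simp
      hence "real p < real_of_int \<lceil>X\<rceil>" using le_of_int_ceiling[of X] by linarith
      hence "int p < \<lceil>X\<rceil>" by (metis of_int_less_iff of_int_of_nat_eq)
      thus "p \<in> {..<nat \<lceil>X\<rceil>}" by simp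
    qed
    from card_mono[OF finite_lessThan this] show "card {p\<in>S. real p < X} \<le> nat \<lceil>X\<rceil>" by simp
  qed
  finally show ?thesis .
  qed
  have B: "(\<Prod>p\<in>S. real p powr \<delta>) \<le> real q powr \<delta>"
  proof -
  have "(\<Prod>p\<in>S. real p powr \<delta>) = (\<Prod>p\<in>S. real p) powr \<delta>"
    by (simp add: prod_powr_distrib)
  also have "\<dots> \<le> real q powr \<delta>"
  proof (rule powr_mono2)
    have "(\<Prod>p\<in>S. real p) \<le> (\<Prod>p\<in>S. real p ^ multiplicity p q)"
    proof (rule prod_mono)
      fix p assume pS: "p \<in> S"
      hence "multiplicity p q > 0" unfolding S_def using prime_factors_multiplicity by blast
      moreover have "real p \<ge> 1" using Sp[OF pS] by simp
      ultimately show "0 \<le> real p \<and> real p \<le> real p ^ multiplicity p q"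
        by (simp add: Suc_leI self_le_power)
    qed
    also have "\<dots> = real q"
    proof -
      have e: "(\<Prod>p\<in>S. p ^ multiplicity p q) = q" unfolding S_def
        using prod_prime_factors[of q] assms by simp
      have "(\<Prod>p\<in>S. real p ^ multiplicity p q) = real (\<Prod>p\<in>S. p ^ multiplicity p q)" by simp
      thus ?thesis using e by simp
    qed
    finally show "(\<Prod>p\<in>S. real p) \<le> real q" .
    show "0 \<le> \<delta>" using assms by simp
    show "0 \<le> (\<Prod>p\<in>S. real p)" by (simp add: prod_nonneg)
  qed
  finally show ?thesis .
  qed
  have "(\<Prod>p\<in>S. (if real p < X then c0 else 1)) * (\<Prod>p\<in>S. real p powr \<delta>) \<le> c0 ^ nat \<lceil>X\<rceil> * real q powr \<delta>"
    using A B c01 by (intro mult_mono) (auto simp: prod_nonneg)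
  from order_trans[OF main this] show ?thesis unfolding S_def c0_def X_def .
qed


lemma smooth_finite: "finite (smooth_set M R)"
  by (rule finite_subset[OF _ U_finite[of UNIV M]]) (auto simp: smooth_set_def U_def)

lemma smooth_card: assumes "M \<ge> 0" shows "real (card (smooth_set M R)) \<le> M"
proof -
  have "smooth_set M R \<subseteq> {1..nat \<lfloor>M\<rfloor>}"
  proof
    fix n assume "n \<in> smooth_set M R"
    hence n: "1 \<le> n" "real n \<le> M" by (auto simp: smooth_set_def)
    hence "int n \<le> \<lfloor>M\<rfloor>" by (simp add: le_floor_iff)
    thus "n \<in> {1..nat \<lfloor>M\<rfloor>}" using n by auto
  qed
  from card_mono[OF _ this] have "card (smooth_set M R) \<le> nat \<lfloor>M\<rfloor>" by simp
  hence "real (card (smooth_set M R)) \<le> real (nat \<lfloor>M\<rfloor>)" by simp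
  also have "\<dots> \<le> M" using assms by linarith
  finally show ?thesis .
qed

lemma Cq_card:
  assumes "q \<ge> (1::nat)" "\<delta> > 0" "P > 0"
  shows "real (card (Cq_set q P R)) \<le>
    P powr \<delta> * ((1 / (1 - 2 powr (-\<delta>))) ^ nat \<lceil>2 powr (1/\<delta>)\<rceil> * real q powr \<delta>)"
proof -
  have sub: "Cq_set q P R \<subseteq> U (prime_factors q) P"
    using assms(1) by (auto simp: Cq_set_def smooth_set_def U_def in_prime_factors_iff)
  have "real (card (Cq_set q P R)) \<le> real (card (U (prime_factors q) P))"
    using card_mono[OF U_finite sub] by simp
  also have "\<dots> \<le> P powr \<delta> * (\<Prod>p\<in>prime_factors q. 1 / (1 - real p powr (-\<delta>)))"
    by (rule U_count) (use assms in \<open>auto simp: in_prime_factors_iff\<close>)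
  also have "\<dots> \<le> P powr \<delta> * ((1 / (1 - 2 powr (-\<delta>))) ^ nat \<lceil>2 powr (1/\<delta>)\<rceil> * real q powr \<delta>)"
    by (rule mult_left_mono[OF prod_g_bound[OF assms(1,2)]]) simp
  finally show ?thesis .
qed

lemma norm_ee: "norm (ee z) = 1"
proof -
  have "ee z = exp (\<i> * of_real (2 * pi * z))" unfolding ee_def by (simp add: mult_ac)
  thus ?thesis by simp
qed

lemma f_bound:
  assumes "q \<ge> (1::nat)" "\<delta> > 0" "P \<ge> 1" "M \<ge> 1" "real q \<le> P powr (real k / 2)"
  defines "K \<equiv> (1 / (1 - 2 powr (-\<delta>))) ^ nat \<lceil>2 powr (1/\<delta>)\<rceil>"
  shows "norm (f_dagger k q \<alpha> P M R) \<le> M * K * P powr (\<delta> * (1 + real k / 2))"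
proof -
  define V where "V = {v \<in> smooth_set M R. coprime v q}"
  have Vfin: "finite V" unfolding V_def using smooth_finite by simp
  have K0: "K \<ge> 0" unfolding K_def
  proof -
    have "(2::real) powr (-\<delta>) < 1" using assms by (intro powr_less_one) auto
    thus "0 \<le> (1 / (1 - 2 powr (-\<delta>))) ^ nat \<lceil>2 powr (1/\<delta>)\<rceil>" by simp
  qed
  have "norm (f_dagger k q \<alpha> P M R) \<le> (\<Sum>v\<in>V. norm (\<Sum>u \<in> Cq_set q (P / real v) R. ee (\<alpha> * real (u * v) ^ k)))"
    unfolding f_dagger_def V_def by (rule norm_sum)
  also have "\<dots> \<le> (\<Sum>v\<in>V. K * P powr (\<delta> * (1 + real k / 2)))"
  proof (rule sum_mono)
    fix v assume "v \<in> V"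
    hence v1: "v \<ge> 1" by (auto simp: V_def smooth_set_def)
    have Pv: "P / real v > 0" using assms v1 by simp
    have "norm (\<Sum>u \<in> Cq_set q (P / real v) R. ee (\<alpha> * real (u * v) ^ k))
        \<le> (\<Sum>u \<in> Cq_set q (P / real v) R. norm (ee (\<alpha> * real (u * v) ^ k)))" by (rule norm_sum)
    also have "\<dots> = real (card (Cq_set q (P / real v) R))" by (simp add: norm_ee)
    also have "\<dots> \<le> (P / real v) powr \<delta> * (K * real q powr \<delta>)"
      unfolding K_def by (rule Cq_card[OF assms(1,2) Pv])
    also have "\<dots> \<le> P powr \<delta> * (K * (P powr (real k / 2)) powr \<delta>)"
    proof (rule mult_mono)
      show "(P / real v) powr \<delta> \<le> P powr \<delta>"
        using Pv v1 assms by (intro powr_mono2) (auto simp: divide_le_eq)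
      show "K * real q powr \<delta> \<le> K * (P powr (real k / 2)) powr \<delta>"
        using K0 assms by (intro mult_left_mono powr_mono2) auto
    qed (use K0 in auto)
    also have "\<dots> = K * P powr (\<delta> * (1 + real k / 2))"
      by (simp add: powr_powr powr_add[symmetric] algebra_simps)
    finally show "norm (\<Sum>u \<in> Cq_set q (P / real v) R. ee (\<alpha> * real (u * v) ^ k))
        \<le> K * P powr (\<delta> * (1 + real k / 2))" .
  qed
  also have "\<dots> = real (card V) * (K * P powr (\<delta> * (1 + real k / 2)))" by simp
  also have "\<dots> \<le> M * (K * P powr (\<delta> * (1 + real k / 2)))"
  proof (rule mult_right_mono)
    have "card V \<le> card (smooth_set M R)" unfolding V_def by (rule card_mono[OF smooth_finite]) auto
    hence "real (card V) \<le> real (card (smooth_set M R))" by simp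
    also have "\<dots> \<le> M" using assms by (intro smooth_card) auto
    finally show "real (card V) \<le> M" .
  qed (use K0 in auto)
  finally show ?thesis by (simp add: mult_ac)
qed

lemma arc_cover:
  assumes "q \<ge> (1::nat)"
  shows "indicator (major_arc k q Q P) \<alpha> \<le>
     (\<Sum>a\<le>q. indicator {real a / real q - Q * P powr (- real k) / real q ..
                          real a / real q + Q * P powr (- real k) / real q} \<alpha> :: real)"
proof (cases "\<alpha> \<in> major_arc k q Q P")
  case True
  then obtain a where a: "a \<le> q" "\<bar>real q * \<alpha> - real a\<bar> \<le> Q * P powr (- real k)"
    unfolding major_arc_def by auto
  have q0: "real q > 0" using assms by simp
  have "\<bar>\<alpha> - real a / real q\<bar> = \<bar>real q * \<alpha> - real a\<bar> / real q"
    using q0 by (simp add: field_simps abs_div_pos[symmetric])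
  hence "\<bar>\<alpha> - real a / real q\<bar> \<le> Q * P powr (- real k) / real q"
    using a(2) q0 by (simp add: divide_right_mono)
  hence mem: "\<alpha> \<in> {real a / real q - Q * P powr (- real k) / real q ..
                          real a / real q + Q * P powr (- real k) / real q}" by auto
  have "(1::real) = indicator {real a / real q - Q * P powr (- real k) / real q ..
                          real a / real q + Q * P powr (- real k) / real q} \<alpha>"
    using mem by simp
  also have "\<dots> \<le> (\<Sum>a\<le>q. indicator {real a / real q - Q * P powr (- real k) / real q ..
                          real a / real q + Q * P powr (- real k) / real q} \<alpha>)"
    by (rule member_le_sum[of a]) (use a in auto)
  finally show ?thesis using True by simp
next
  case False
  thus ?thesis by (simp add: sum_nonneg)
qed



theorem lemma3p2:
  fixes k :: nat and s :: real
  assumes "k \<ge> 1" and "s > 0"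
  shows "\<forall>\<epsilon>>0. \<exists>\<eta>>0. \<exists>C P\<^sub>0. \<forall>P \<ge> P\<^sub>0. \<forall>R M Q. \<forall>q::nat.
           2 \<le> R \<and> R \<le> P powr \<eta> \<and> 1 \<le> M \<and> 1 \<le> Q \<and> Q \<le> P powr (real k / 2)
           \<and> 1 \<le> q \<and> real q \<le> Q \<longrightarrow>
           (LINT \<alpha>:major_arc k q Q P|lborel. norm (f_dagger k q \<alpha> P M R) powr s)
             \<le> C * Q * M powr s * P powr (\<epsilon> - real k)"
proof (intro allI impI)
  fix \<epsilon> :: real assume \<epsilon>: "\<epsilon> > 0"
  define \<delta> where "\<delta> = \<epsilon> / (s * (1 + real k / 2))"
  have \<delta>: "\<delta> > 0" unfolding \<delta>_def using \<epsilon> assms by (simp add: add_pos_nonneg)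
  have spos: "s * (1 + real k / 2) > 0" using assms by (simp add: add_pos_nonneg)
  have \<delta>e: "\<delta> * (1 + real k / 2) * s = \<epsilon>"
  proof -
    have "\<delta> * (1 + real k / 2) * s = \<epsilon> / (s * (1 + real k / 2)) * (s * (1 + real k / 2))"
      unfolding \<delta>_def by (simp add: mult_ac)
    also have "\<dots> = \<epsilon>" using assms by (simp add: add_pos_nonneg less_imp_neq[symmetric])
    finally show ?thesis .
  qed
  define K where "K = (1 / (1 - 2 powr (-\<delta>))) ^ nat \<lceil>2 powr (1/\<delta>)\<rceil>"
  have K0: "K \<ge> 0" unfolding K_def
  proof -
    have "(2::real) powr (-\<delta>) < 1" using \<delta> by (intro powr_less_one) auto
    thus "0 \<le> (1 / (1 - 2 powr (-\<delta>))) ^ nat \<lceil>2 powr (1/\<delta>)\<rceil>" by simp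
  qed
  show "\<exists>\<eta>>0. \<exists>C P\<^sub>0. \<forall>P \<ge> P\<^sub>0. \<forall>R M Q. \<forall>q::nat.
           2 \<le> R \<and> R \<le> P powr \<eta> \<and> 1 \<le> M \<and> 1 \<le> Q \<and> Q \<le> P powr (real k / 2)
           \<and> 1 \<le> q \<and> real q \<le> Q \<longrightarrow>
           (LINT \<alpha>:major_arc k q Q P|lborel. norm (f_dagger k q \<alpha> P M R) powr s)
             \<le> C * Q * M powr s * P powr (\<epsilon> - real k)"
  proof (rule exI[of _ 1], rule conjI, simp, rule exI[of _ "4 * K powr s"], rule exI[of _ 1], intro allI impI)
    fix P R M Q :: real and q :: nat
    assume P1: "1 \<le> P" and H: "2 \<le> R \<and> R \<le> P powr 1 \<and> 1 \<le> M \<and> 1 \<le> Q \<and> Q \<le> P powr (real k / 2)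
           \<and> 1 \<le> q \<and> real q \<le> Q"
    hence M1: "M \<ge> 1" and Q1: "Q \<ge> 1" and q1: "q \<ge> 1" and qQ: "real q \<le> Q"
      and QP: "Q \<le> P powr (real k / 2)" by auto
    define A where "A = major_arc k q Q P"
    define g where "g = (\<lambda>\<alpha>. norm (f_dagger k q \<alpha> P M R) powr s)"
    define B where "B = M powr s * K powr s * P powr \<epsilon>"
    define r where "r = Q * P powr (- real k) / real q"
    define I where "I = (\<lambda>a::nat. {real a / real q - r .. real a / real q + r})"
    have q0: "real q > 0" using q1 by simp
    have r0: "r \<ge> 0" unfolding r_def using Q1 q0 by simp
    have B0: "B \<ge> 0" unfolding B_def by simp
    have gB: "g \<alpha> \<le> B" for \<alpha>
    proof -
      have "norm (f_dagger k q \<alpha> P M R) \<le> M * K * P powr (\<delta> * (1 + real k / 2))"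
        unfolding K_def by (rule f_bound[OF q1 \<delta> P1 M1]) (use qQ QP in linarith)
      hence "g \<alpha> \<le> (M * K * P powr (\<delta> * (1 + real k / 2))) powr s"
        unfolding g_def using assms by (intro powr_mono2) auto
      also have "\<dots> = B" unfolding B_def
        using \<delta>e by (simp add: powr_mult powr_powr)
      finally show ?thesis .
    qed
    have g0: "g \<alpha> \<ge> 0" for \<alpha> unfolding g_def by simp
    have intI: "integrable lborel (indicator (I a) :: real \<Rightarrow> real)" for a
      unfolding I_def by (rule integrable_real_indicator) (auto simp: emeasure_lborel_Icc_eq)
    have RHS: "integral\<^sup>L lborel (\<lambda>\<alpha>. B * (\<Sum>a\<le>q. indicator (I a) \<alpha>)) = B * (real q + 1) * (2 * r)"
    proof -
      have "integral\<^sup>L lborel (\<lambda>\<alpha>. B * (\<Sum>a\<le>q. indicator (I a) \<alpha>))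
          = B * (\<Sum>a\<le>q. integral\<^sup>L lborel (indicator (I a) :: real \<Rightarrow> real))"
        using intI by (simp add: integral_sum)
      also have "\<dots> = B * (\<Sum>a\<le>q. 2 * r)"
        using r0 by (simp add: I_def)
      finally show ?thesis by (simp add: add.commute)
    qed
    have "(LINT \<alpha>:A|lborel. g \<alpha>) \<le> B * (real q + 1) * (2 * r)"
    proof (cases "integrable lborel (\<lambda>\<alpha>. indicator A \<alpha> *\<^sub>R g \<alpha>)")
      case True
      have "(LINT \<alpha>:A|lborel. g \<alpha>) = integral\<^sup>L lborel (\<lambda>\<alpha>. indicator A \<alpha> *\<^sub>R g \<alpha>)"
        by (simp add: set_lebesgue_integral_def)
      also have "\<dots> \<le> integral\<^sup>L lborel (\<lambda>\<alpha>. B * (\<Sum>a\<le>q. indicator (I a) \<alpha>))"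
      proof (rule integral_mono[OF True])
        show "integrable lborel (\<lambda>\<alpha>. B * (\<Sum>a\<le>q. indicator (I a) \<alpha>))"
          using intI by auto
        fix \<alpha> :: real
        have c: "indicator A \<alpha> \<le> (\<Sum>a\<le>q. indicator (I a) \<alpha> :: real)"
          unfolding A_def I_def r_def by (rule arc_cover[OF q1])
        have "indicator A \<alpha> *\<^sub>R g \<alpha> = indicator A \<alpha> * g \<alpha>" by simp
        also have "\<dots> \<le> indicator A \<alpha> * B" by (rule mult_left_mono[OF gB]) simp
        also have "\<dots> \<le> (\<Sum>a\<le>q. indicator (I a) \<alpha>) * B" by (rule mult_right_mono[OF c B0])
        finally show "indicator A \<alpha> *\<^sub>R g \<alpha> \<le> B * (\<Sum>a\<le>q. indicator (I a) \<alpha>)"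
          by (simp add: mult.commute)
      qed
      also have "\<dots> = B * (real q + 1) * (2 * r)" by (rule RHS)
      finally show ?thesis .
    next
      case False
      hence "(LINT \<alpha>:A|lborel. g \<alpha>) = 0"
        by (simp add: set_lebesgue_integral_def not_integrable_integral_eq)
      thus ?thesis using B0 r0 by simp
    qed
    also have "\<dots> \<le> B * 4 * (Q * P powr (- real k))"
    proof -
      have "(real q + 1) * (2 * r) = 2 * ((real q + 1) / real q) * (Q * P powr (- real k))"
        unfolding r_def using q0 by (simp add: field_simps)
      also have "\<dots> \<le> 2 * 2 * (Q * P powr (- real k))"
      proof (rule mult_right_mono)
        have "(real q + 1) / real q \<le> 2" using q1 q0 by (simp add: divide_le_eq)
        thus "2 * ((real q + 1) / real q) \<le> 2 * 2" by linarith
      qed (use Q1 in simp)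
      finally have "(real q + 1) * (2 * r) \<le> 4 * (Q * P powr (- real k))" by simp
      from mult_left_mono[OF this B0] show ?thesis by (simp only: mult.assoc)
    qed
    also have "\<dots> = 4 * K powr s * Q * M powr s * P powr (\<epsilon> - real k)"
    proof -
      have e: "P powr \<epsilon> * P powr (- real k) = P powr (\<epsilon> - real k)"
        by (simp only: powr_add[symmetric] diff_conv_add_uminus)
      show ?thesis unfolding B_def e[symmetric] by (simp only: mult_ac)
    qed
    finally show "(LINT \<alpha>:major_arc k q Q P|lborel. norm (f_dagger k q \<alpha> P M R) powr s)
             \<le> 4 * K powr s * Q * M powr s * P powr (\<epsilon> - real k)"
      by (simp only: A_def g_def)
  qed
qed

end
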